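(* Let $\mathcal{S}$ be a communicating system, $\mathbf{l_{in}},\mathbf{l_{fin}}$ global states and $w\in\Sigma^*$. Then $w\in\mathcal{L}(\mathcal{A}_{SR}(\mathbf{l_{in}},\mathbf{l_{mid}},\mathbf{l_{fin}}))$ for some global state $\mathbf{l_{mid}}$ if and only if $\mathbf{l_{in}}\xrightarrow{msc(w)}\mathbf{l_{fin}}$.
   Context: Fix finite sets $\mathbb{M}$ of messages and $\mathbb{P}$ of processes; actions are sends $\mathrm{send}(p,q,m)$ and receives $\mathrm{rec}(p,q,m)$ (process $q$ receives $m$ from $p$). A system $\mathcal{S}$ is a family of finite automata, one per process, with transitions labelled by that process's sends and receives; its global automaton $(L_{\mathcal{S}},\delta_{\mathcal{S}},\mathbf{l_0})$ is the asynchronous product, with global states $L_{\mathcal{S}}=\prod_p L_p$, where a transition of process $q$ changes only the $q$-component. For an action sequence $e=a_1\cdots a_n$, write $\mathbf{l}\xRightarrow{e}\mathbf{l'}$ if $\mathbf{l}\xrightarrow{a_1}\cdots\xrightarrow{a_n}\mathbf{l'}$ in the global automaton (control states only, no buffers). An MSC is $(Ev,\lambda,\prec_{po},\prec_{src})$ with $\lambda$ labelling events by actions, $\prec_{po}$ totally ordering each process's events and $\prec_{src}$ matching some sends $\mathrm{send}(p,q,m)$ bijectively to all receives $\mathrm{rec}(p,q,m)$; a linearization is the action sequence of a total order extending $(\prec_{po}\cup\prec_{src})^*$. For an action sequence $e=a_1\cdots a_n$, $msc(e)$ has events $1..n$, $i\prec_{po}j$ iff $i<j$ and $a_i,a_j$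 belong to the same process, and $i\prec_{src}j$ iff $a_i=\mathrm{send}(p,q,m)$ and $a_j=\mathrm{rec}(p,q,m)$ are the $\ell$-th actions with these labels for some $\ell$, $i<j$. For an MSC $\mu$, $\mathbf{l}\xrightarrow{\mu}\mathbf{l'}$ means $\mathbf{l}\xRightarrow{e}\mathbf{l'}$ for any linearization $e$ of $\mu$. $\Sigma=\{!?,!\}\times\mathbb{M}\times\mathbb{P}^2$, symbols written $!?m^{p\to q}$, $!m^{p\to q}$. Substitutions $\sigma_1(!?m^{p\to q})=\sigma_1(!m^{p\to q})=\mathrm{send}(p,q,m)$, $\sigma_2(!?m^{p\to q})=\mathrm{rec}(p,q,m)$, $\sigma_2(!m^{p\to q})=\varepsilon$, and $msc(w)=msc(\sigma_1(w)\sigma_2(w))$. For global states $\mathbf{l_{in}},\mathbf{l_{mid}},\mathbf{l_{fin}}$, the automaton $\mathcal{A}_{SR}(\mathbf{l_{in}},\mathbf{l_{mid}},\mathbf{l_{fin}})$ over $\Sigma$ has states $L_{\mathcal{S}}\times L_{\mathcal{S}}$, initial state $(\mathbf{l_{in}},\mathbf{l_{mid}})$, single final state $(\mathbf{l_{mid}},\mathbf{l_{fin}})$, and for every global transition $(\mathbf{l_s},\mathrm{send}(p,q,m),\mathbf{l_s'})\in\delta_{\mathcal{S}}$: transitions $((\mathbf{l_s},\mathbf{l}),!m^{p\to q},(\mathbf{l_s'},\mathbf{l}))$ for all $\mathbf{l}\in L_{\mathcal{S}}$, and, for every global transition $(\mathbf{l_r},\mathrm{rec}(p,q,m),\mathbf{l_r'})\in\delta_{\mathcal{S}}$,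 a transition $((\mathbf{l_s},\mathbf{l_r}),!?m^{p\to q},(\mathbf{l_s'},\mathbf{l_r'}))$. $\mathcal{L}(\cdot)$ denotes its language. *)

theory Defs
  imports Main
begin

datatype ('p, 'm) action = Send 'p 'p 'm | Rec 'p 'p 'm

fun proc :: "('p, 'm) action \<Rightarrow> 'p" where
  "proc (Send p q m) = p"
| "proc (Rec p q m) = q"

record ('p, 'm, 's) system =
  lstates :: "'p \<Rightarrow> 's set"
  ltrans  :: "'p \<Rightarrow> ('s \<times> ('p, 'm) action \<times> 's) set"
  linit   :: "'p \<Rightarrow> 's"

definition comm_system :: "('p::finite, 'm::finite, 's) system \<Rightarrow> bool" where
  "comm_system S \<longleftrightarrow>
     (\<forall>p. finite (lstates S p) \<and> linit S p \<in> lstates S p \<and>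
          (\<forall>s a s'. (s, a, s') \<in> ltrans S p \<longrightarrow>
              s \<in> lstates S p \<and> s' \<in> lstates S p \<and> proc a = p))"

definition gstates :: "('p, 'm, 's) system \<Rightarrow> ('p \<Rightarrow> 's) set" where
  "gstates S = {l. \<forall>p. l p \<in> lstates S p}"

definition gtrans :: "('p, 'm, 's) system \<Rightarrow> (('p \<Rightarrow> 's) \<times> ('p, 'm) action \<times> ('p \<Rightarrow> 's)) set" where
  "gtrans S = {(l, a, l'). l \<in> gstates S \<and> l' \<in> gstates S \<and>
                 (l (proc a), a, l' (proc a)) \<in> ltrans S (proc a) \<and>
                 (\<forall>r. r \<noteq> proc a \<longrightarrow> l' r = l r)}"

fun gsteps :: "('p, 'm, 's) system \<Rightarrow> ('p \<Rightarrow> 's) \<Rightarrow> ('p, 'm) action list \<Rightarrow> ('p \<Rightarrow> 's) \<Rightarrow> bool" where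
  "gsteps S l [] l' \<longleftrightarrow> l = l'"
| "gsteps S l (a # e) l' \<longleftrightarrow> (\<exists>l''. (l, a, l'') \<in> gtrans S \<and> gsteps S l'' e l')"

record ('p, 'm) msc =
  events :: "nat set"
  lab    :: "nat \<Rightarrow> ('p, 'm) action"
  po     :: "(nat \<times> nat) set"
  src    :: "(nat \<times> nat) set"

definition linearization :: "('p, 'm) msc \<Rightarrow> ('p, 'm) action list \<Rightarrow> bool" where
  "linearization \<mu> e \<longleftrightarrow>
     (\<exists>es. distinct es \<and> set es = events \<mu> \<and> e = map (lab \<mu>) es \<and>
        (\<forall>i j. i < length es \<longrightarrow> j < length es \<longrightarrow>
               (es ! i, es ! j) \<in> (po \<mu> \<union> src \<mu>)\<^sup>* \<longrightarrow> i \<le> j))"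

definition occ :: "('p, 'm) action list \<Rightarrow> nat \<Rightarrow> nat" where
  "occ e i = length (filter (\<lambda>b. b = e ! i) (take (Suc i) e))"

(* msc(e); events are the positions 0..<length e (position i carries a_{i+1}) *)
definition msc_of :: "('p, 'm) action list \<Rightarrow> ('p, 'm) msc" where
  "msc_of e = \<lparr> events = {..<length e},
                lab = (\<lambda>i. e ! i),
                po = {(i, j). i < j \<and> j < length e \<and> proc (e ! i) = proc (e ! j)},
                src = {(i, j). i < j \<and> j < length e \<and>
                          (\<exists>p q m. e ! i = Send p q m \<and> e ! j = Rec p q m) \<and>
                          occ e i = occ e j} \<rparr>"

definition msc_trans :: "('p, 'm, 's) system \<Rightarrow> ('p \<Rightarrow> 's) \<Rightarrow> ('p, 'm) msc \<Rightarrow> ('p \<Rightarrow> 's) \<Rightarrow> bool" where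
  "msc_trans S l \<mu> l' \<longleftrightarrow> (\<forall>e. linearization \<mu> e \<longrightarrow> gsteps S l e l')"

(* SR m p q = !?m^{p->q};  SO m p q = !m^{p->q} *)
datatype ('p, 'm) sym = SR 'm 'p 'p | SO 'm 'p 'p

fun sigma1 :: "('p, 'm) sym \<Rightarrow> ('p, 'm) action list" where
  "sigma1 (SR m p q) = [Send p q m]"
| "sigma1 (SO m p q) = [Send p q m]"

fun sigma2 :: "('p, 'm) sym \<Rightarrow> ('p, 'm) action list" where
  "sigma2 (SR m p q) = [Rec p q m]"
| "sigma2 (SO m p q) = []"

definition msc_word :: "('p, 'm) sym list \<Rightarrow> ('p, 'm) msc" where
  "msc_word w = msc_of (concat (map sigma1 w) @ concat (map sigma2 w))"

definition asr_trans :: "('p, 'm, 's) system \<Rightarrow>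
    ((('p \<Rightarrow> 's) \<times> ('p \<Rightarrow> 's)) \<times> ('p, 'm) sym \<times> (('p \<Rightarrow> 's) \<times> ('p \<Rightarrow> 's))) set" where
  "asr_trans S =
     {((ls, l), SO m p q, (ls', l)) | ls ls' l m p q.
         (ls, Send p q m, ls') \<in> gtrans S \<and> l \<in> gstates S}
   \<union> {((ls, lr), SR m p q, (ls', lr')) | ls ls' lr lr' m p q.
         (ls, Send p q m, ls') \<in> gtrans S \<and> (lr, Rec p q m, lr') \<in> gtrans S}"

fun nfa_run :: "('q \<times> 'a \<times> 'q) set \<Rightarrow> 'q \<Rightarrow> 'a list \<Rightarrow> 'q \<Rightarrow> bool" where
  "nfa_run \<delta> s [] s' \<longleftrightarrow> s = s'"
| "nfa_run \<delta> s (a # w) s' \<longleftrightarrow> (\<exists>s''. (s, a, s'') \<in> \<delta> \<and> nfa_run \<delta> s'' w s')"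

definition asr_lang :: "('p, 'm, 's) system \<Rightarrow> ('p \<Rightarrow> 's) \<Rightarrow> ('p \<Rightarrow> 's) \<Rightarrow> ('p \<Rightarrow> 's)
    \<Rightarrow> ('p, 'm) sym list set" where
  "asr_lang S lin lmid lfin = {w. nfa_run (asr_trans S) (lin, lmid) w (lmid, lfin)}"

end

theory Submission
  imports Defs
begin

fun lpath :: "('p, 'm, 's) system \<Rightarrow> 'p \<Rightarrow> 's \<Rightarrow> ('p, 'm) action list \<Rightarrow> 's \<Rightarrow> bool" where
  "lpath S p s [] s' \<longleftrightarrow> s = s'"
| "lpath S p s (a # e) s' \<longleftrightarrow> (\<exists>s''. (s, a, s'') \<in> ltrans S p \<and> lpath S p s'' e s')"

lemma gsteps_char:
  assumes cs: "comm_system S" and l: "l \<in> gstates S"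
  shows "gsteps S l e l' \<longleftrightarrow> l' \<in> gstates S \<and>
           (\<forall>p. lpath S p (l p) (filter (\<lambda>a. proc a = p) e) (l' p))"
  using l
proof (induction e arbitrary: l)
  case Nil
  then show ?case by auto
next
  case (Cons a e)
  show ?case
  proof
    assume "gsteps S l (a # e) l'"
    then obtain l'' where t: "(l, a, l'') \<in> gtrans S" and g: "gsteps S l'' e l'" by auto
    have l'': "l'' \<in> gstates S" using t by (simp add: gtrans_def)
    from Cons.IH[OF l''] g have *: "l' \<in> gstates S"
      "\<forall>p. lpath S p (l'' p) (filter (\<lambda>a. proc a = p) e) (l' p)" by auto
    have "lpath S p (l p) (filter (\<lambda>a. proc a = p) (a # e)) (l' p)" for p
    proof (cases "proc a = p")
      case True
      then show ?thesis using t * by (auto simp: gtrans_def)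
    next
      case False
      then have eq: "l'' p = l p" using t by (auto simp: gtrans_def)
      have "lpath S p (l'' p) (filter (\<lambda>a. proc a = p) e) (l' p)" using * by blast
      then show ?thesis using False eq by simp
    qed
    then show "l' \<in> gstates S \<and> (\<forall>p. lpath S p (l p) (filter (\<lambda>a. proc a = p) (a # e)) (l' p))"
      using * by auto
  next
    assume R: "l' \<in> gstates S \<and> (\<forall>p. lpath S p (l p) (filter (\<lambda>a. proc a = p) (a # e)) (l' p))"
    then have "lpath S (proc a) (l (proc a)) (filter (\<lambda>b. proc b = proc a) (a # e)) (l' (proc a))"
      by blast
    then obtain s where s: "(l (proc a), a, s) \<in> ltrans S (proc a)"
      and sp: "lpath S (proc a) s (filter (\<lambda>b. proc b = proc a) e) (l' (proc a))"
      by auto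
    define l'' where "l'' = l(proc a := s)"
    have sin: "s \<in> lstates S (proc a)" using cs s unfolding comm_system_def by blast
    have l'': "l'' \<in> gstates S" using Cons.prems sin by (auto simp: gstates_def l''_def)
    have t: "(l, a, l'') \<in> gtrans S" using Cons.prems l'' s by (auto simp: gtrans_def l''_def)
    have "\<forall>p. lpath S p (l'' p) (filter (\<lambda>a. proc a = p) e) (l' p)"
    proof
      fix p
      show "lpath S p (l'' p) (filter (\<lambda>a. proc a = p) e) (l' p)"
      proof (cases "proc a = p")
        case True
        then show ?thesis using sp by (auto simp: l''_def)
      next
        case False
        have "lpath S p (l p) (filter (\<lambda>a. proc a = p) (a # e)) (l' p)" using R by blast
        then show ?thesis using False by (simp add: l''_def)
      qed
    qed
    then have "gsteps S l'' e l'" using Cons.IH[OF l''] R by auto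
    then show "gsteps S l (a # e) l'" using t by auto
  qed
qed

lemma gsteps_append:
  "gsteps S l (x @ y) l' \<longleftrightarrow> (\<exists>m. gsteps S l x m \<and> gsteps S m y l')"
  by (induction x arbitrary: l) auto

lemma lin_filter:
  assumes "linearization (msc_of E) e'"
  shows "filter (\<lambda>a. proc a = p) e' = filter (\<lambda>a. proc a = p) E"
proof -
  obtain es where d: "distinct es" and st: "set es = {..<length E}" and e': "e' = map (nth E) es"
    and ord: "\<forall>i j. i < length es \<longrightarrow> j < length es \<longrightarrow>
               (es ! i, es ! j) \<in> (po (msc_of E) \<union> src (msc_of E))\<^sup>* \<longrightarrow> i \<le> j"
    using assms unfolding linearization_def by (auto simp: msc_of_def)
  define R where "R = (\<lambda>x y. proc (E ! x) = p \<longrightarrow> proc (E ! y) = p \<longrightarrow> x < y)"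
  have "sorted_wrt R es"
    unfolding sorted_wrt_iff_nth_less
  proof (intro allI impI)
    fix i j assume ij: "i < j" "j < length es"
    have ne: "es ! i \<noteq> es ! j" using d ij by (simp add: nth_eq_iff_index_eq)
    have xi: "es ! i < length E" using st ij by (metis lessThan_iff nth_mem order.strict_trans)
    show "R (es ! i) (es ! j)"
      unfolding R_def
    proof (intro impI, rule ccontr)
      assume p1: "proc (E ! (es ! i)) = p" and p2: "proc (E ! (es ! j)) = p" and "\<not> es ! i < es ! j"
      then have "es ! j < es ! i" using ne by simp
      then have "(es ! j, es ! i) \<in> po (msc_of E)" using xi p1 p2 by (simp add: msc_of_def)
      then have "j \<le> i" using ord ij by (meson UnI1 order.strict_trans r_into_rtrancl)
      then show False using ij by simp
    qed
  qed
  then have "sorted_wrt R (filter (\<lambda>i. proc (E ! i) = p) es)" by (rule sorted_wrt_filter)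
  then have s1: "sorted_wrt (<) (filter (\<lambda>i. proc (E ! i) = p) es)"
    unfolding R_def by (rule sorted_wrt_mono_rel[rotated]) auto
  have s2: "sorted_wrt (<) (filter (\<lambda>i. proc (E ! i) = p) [0..<length E])"
    by (rule sorted_wrt_filter) simp
  have se: "set (filter (\<lambda>i. proc (E ! i) = p) es) = set (filter (\<lambda>i. proc (E ! i) = p) [0..<length E])"
    using st by auto
  have fe: "filter (\<lambda>i. proc (E ! i) = p) es = filter (\<lambda>i. proc (E ! i) = p) [0..<length E]"
    using s1 s2 se unfolding strict_sorted_iff by (blast intro: sorted_distinct_set_unique)
  have "filter (\<lambda>a. proc a = p) e' = map (nth E) (filter (\<lambda>i. proc (E ! i) = p) es)"
    unfolding e' filter_map o_def ..
  also have "\<dots> = map (nth E) (filter (\<lambda>i. proc (E ! i) = p) [0..<length E])"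
    unfolding fe ..
  also have "\<dots> = filter (\<lambda>a. proc a = p) (map (nth E) [0..<length E])"
    unfolding filter_map o_def ..
  also have "\<dots> = filter (\<lambda>a. proc a = p) E" by (simp only: map_nth)
  finally show ?thesis .
qed

lemma run_char:
  assumes "b \<in> gstates S"
  shows "nfa_run (asr_trans S) (a, b) w (c, d) \<longleftrightarrow>
    gsteps S a (concat (map sigma1 w)) c \<and> gsteps S b (concat (map sigma2 w)) d"
  using assms
proof (induction w arbitrary: a b)
  case Nil
  then show ?case by auto
next
  case (Cons x w)
  show ?case
  proof (cases x)
    case (SR m p q)
    have "nfa_run (asr_trans S) (a, b) (x # w) (c, d) \<longleftrightarrow>
      (\<exists>a' b'. (a, Send p q m, a') \<in> gtrans S \<and> (b, Rec p q m, b') \<in> gtrans S \<and>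
         nfa_run (asr_trans S) (a', b') w (c, d))"
      by (auto simp: SR asr_trans_def)
    also have "\<dots> \<longleftrightarrow> (\<exists>a' b'. (a, Send p q m, a') \<in> gtrans S \<and> (b, Rec p q m, b') \<in> gtrans S \<and>
         gsteps S a' (concat (map sigma1 w)) c \<and> gsteps S b' (concat (map sigma2 w)) d)"
      using Cons.IH by (auto simp: gtrans_def)
    finally show ?thesis by (auto simp: SR gsteps_append)
  next
    case (SO m p q)
    have "nfa_run (asr_trans S) (a, b) (x # w) (c, d) \<longleftrightarrow>
      (\<exists>a'. (a, Send p q m, a') \<in> gtrans S \<and> nfa_run (asr_trans S) (a', b) w (c, d))"
      using Cons.prems by (auto simp: SO asr_trans_def)
    also have "\<dots> \<longleftrightarrow> (\<exists>a'. (a, Send p q m, a') \<in> gtrans S \<and>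
         gsteps S a' (concat (map sigma1 w)) c \<and> gsteps S b (concat (map sigma2 w)) d)"
      using Cons.IH Cons.prems by auto
    finally show ?thesis by (auto simp: SO)
  qed
qed

lemma id_lin: "linearization (msc_of E) E"
proof -
  have sub: "(po (msc_of E) \<union> src (msc_of E)) \<subseteq> {(i, j). i \<le> j}"
    by (auto simp: msc_of_def)
  have "(x, y) \<in> (po (msc_of E) \<union> src (msc_of E))\<^sup>* \<Longrightarrow> x \<le> y" for x y
  proof (induction rule: rtrancl_induct)
    case base then show ?case by simp
  next
    case (step y z) then show ?case using sub by auto
  qed
  then show ?thesis unfolding linearization_def
    by (intro exI[of _ "[0..<length E]"]) (auto simp: msc_of_def map_nth)
qed

theorem lemma3:
  fixes S :: "('p::finite, 'm::finite, 's) system"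
    and lin lfin :: "'p \<Rightarrow> 's"
    and w :: "('p, 'm) sym list"
  assumes "comm_system S"
    and "lin \<in> gstates S"
    and "lfin \<in> gstates S"
  shows "(\<exists>lmid \<in> gstates S. w \<in> asr_lang S lin lmid lfin) \<longleftrightarrow>
         msc_trans S lin (msc_word w) lfin"
proof
  assume "\<exists>lmid \<in> gstates S. w \<in> asr_lang S lin lmid lfin"
  then obtain lmid where lm: "lmid \<in> gstates S" and r: "w \<in> asr_lang S lin lmid lfin" by blast
  have "gsteps S lin (concat (map sigma1 w) @ concat (map sigma2 w)) lfin"
    using run_char[OF lm] r by (auto simp: asr_lang_def gsteps_append)
  then show "msc_trans S lin (msc_word w) lfin"
    unfolding msc_trans_def msc_word_def
    using gsteps_char[OF assms(1,2)] lin_filter by metis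
next
  assume "msc_trans S lin (msc_word w) lfin"
  then have "gsteps S lin (concat (map sigma1 w) @ concat (map sigma2 w)) lfin"
    unfolding msc_trans_def msc_word_def using id_lin by blast
  then obtain lmid where a: "gsteps S lin (concat (map sigma1 w)) lmid"
    and b: "gsteps S lmid (concat (map sigma2 w)) lfin" by (auto simp: gsteps_append)
  have lm: "lmid \<in> gstates S" using gsteps_char[OF assms(1,2)] a by blast
  show "\<exists>lmid \<in> gstates S. w \<in> asr_lang S lin lmid lfin"
    using lm a b run_char[OF lm, of lin w lmid lfin] unfolding asr_lang_def by blast
qed

end
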